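(* Let $g$ solve system (S3) with initial data $h_{ii}>0$ satisfying $4h_{11}<h_{22}=h_{33}$. Then the solution exists for all $t\ge 0$, $g_{22}=g_{33}$ for all $t$, $g_{22}$ and $g_{33}$ are increasing, and as $t\to\infty$: $g_{00}\to0$, $g_{11}\to0$, $g_{22},g_{33}\to\infty$. Moreover $(g_{00}g_{22}^3 - 4\det h)\,g_{00}^3g_{22} = \kappa$ for all $t$, where $\kappa = (h_{00}h_{22}^3-4\det h)\,h_{00}^3h_{22}$.
   Context: Let $\det h = h_{00}h_{11}h_{22}h_{33}$, $\beta=\frac{1}{6(\det h)^2}$, and $p(x,y,z) = x^4 - x^3(y+z) + x^2yz + x(-y^3+y^2z+yz^2-z^3) + y^4 - y^3z - yz^3 + z^4$, $q(x,y,z) = 5x^4 - 3x^3(y+z) + x^2yz + x(y^3-y^2z-yz^2+z^3) - 3y^4 + 3y^3z + 3yz^3 - 3z^4$. System (S3): $\dot g_{00} = -\beta\,p(g_{11},g_{22},g_{33})\,g_{00}^3$, $\dot g_{11} = -\beta\,q(g_{11},g_{22},g_{33})\,g_{00}^2g_{11}$, $\dot g_{22} = -\beta\,q(g_{22},g_{33},g_{11})\,g_{00}^2g_{22}$, $\dot g_{33} = -\beta\,q(g_{33},g_{11},g_{22})\,g_{00}^2g_{33}$, $g_{ii}(0)=h_{ii}$. This is Bach flow on $\mathbb{R}\times\mathbb{S}^3$ in a diagonalizing left-invariant frame with $[e_i,e_j]=\sum_k\varepsilon_{ijk}e_k$; along the flow $g_{00}g_{11}g_{22}g_{33}=\det h$.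 *)

theory Defs
  imports "HOL-Analysis.Analysis"
begin

definition pS3 :: "real \<Rightarrow> real \<Rightarrow> real \<Rightarrow> real" where
  "pS3 x y z = x^4 - x^3*(y+z) + x^2*y*z + x*(-(y^3) + y^2*z + y*z^2 - z^3)
              + y^4 - y^3*z - y*z^3 + z^4"

definition qS3 :: "real \<Rightarrow> real \<Rightarrow> real \<Rightarrow> real" where
  "qS3 x y z = 5*x^4 - 3*x^3*(y+z) + x^2*y*z + x*(y^3 - y^2*z - y*z^2 + z^3)
              - 3*y^4 + 3*y^3*z + 3*y*z^3 - 3*z^4"

definition detS3 :: "real \<Rightarrow> real \<Rightarrow> real \<Rightarrow> real \<Rightarrow> real" where
  "detS3 h0 h1 h2 h3 = h0*h1*h2*h3"

definition betaS3 :: "real \<Rightarrow> real \<Rightarrow> real \<Rightarrow> real \<Rightarrow> real" where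
  "betaS3 h0 h1 h2 h3 = 1 / (6 * (detS3 h0 h1 h2 h3)^2)"

definition S3_global_solution ::
  "real \<Rightarrow> real \<Rightarrow> real \<Rightarrow> real \<Rightarrow>
   (real \<Rightarrow> real) \<Rightarrow> (real \<Rightarrow> real) \<Rightarrow> (real \<Rightarrow> real) \<Rightarrow> (real \<Rightarrow> real) \<Rightarrow> bool" where
  "S3_global_solution h0 h1 h2 h3 g0 g1 g2 g3 \<longleftrightarrow>
     g0 0 = h0 \<and> g1 0 = h1 \<and> g2 0 = h2 \<and> g3 0 = h3 \<and>
     (\<forall>t\<ge>0.
        (g0 has_real_derivative
           (- betaS3 h0 h1 h2 h3 * pS3 (g1 t) (g2 t) (g3 t) * (g0 t)^3)) (at t within {0..}) \<and>
        (g1 has_real_derivative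
           (- betaS3 h0 h1 h2 h3 * qS3 (g1 t) (g2 t) (g3 t) * (g0 t)^2 * g1 t)) (at t within {0..}) \<and>
        (g2 has_real_derivative
           (- betaS3 h0 h1 h2 h3 * qS3 (g2 t) (g3 t) (g1 t) * (g0 t)^2 * g2 t)) (at t within {0..}) \<and>
        (g3 has_real_derivative
           (- betaS3 h0 h1 h2 h3 * qS3 (g3 t) (g1 t) (g2 t) * (g0 t)^2 * g3 t)) (at t within {0..}))"

end

theory Submission
  imports Defs
begin


lemma within_to_at:
  fixes f :: "real \<Rightarrow> real"
  assumes "t > 0" "(f has_real_derivative D) (at t within {0..})"
  shows "(f has_real_derivative D) (at t)"
proof -
  have "t \<in> interior {0::real..}" using assms(1) by simp
  then have "at t within {0..} = at t" by (rule at_within_interior)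
  with assms(2) show ?thesis by simp
qed

lemma deriv_cont:
  fixes f :: "real \<Rightarrow> real"
  assumes "\<And>t. t \<ge> 0 \<Longrightarrow> (f has_real_derivative D t) (at t within {0..})"
  shows "continuous_on {0..} f"
  unfolding continuous_on_eq_continuous_within
proof
  fix x :: real assume "x \<in> {0..}"
  then show "continuous (at x within {0..}) f" using assms[of x] DERIV_continuous by auto
qed

lemma const_from_deriv:
  fixes f :: "real \<Rightarrow> real"
  assumes "\<And>t. t \<ge> 0 \<Longrightarrow> (f has_real_derivative 0) (at t within {0..})"
  shows "\<forall>t\<ge>0. f t = f 0"
proof -
  have "\<exists>c. \<forall>x\<in>{0::real..}. f x = c"
  proof (rule has_derivative_zero_constant)
    show "convex {0::real..}" by (simp add: convex_real_interval)
  next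
    fix x :: real assume "x \<in> {0..}"
    then have "(f has_derivative (*) 0) (at x within {0..})"
      using assms[of x] by (simp add: has_field_derivative_def)
    moreover have "((*) (0::real)) = (\<lambda>h. 0)" by auto
    ultimately show "(f has_derivative (\<lambda>h. 0)) (at x within {0..})" by simp
  qed
  then show ?thesis by force
qed

lemma lin_unique:
  fixes d c :: "real \<Rightarrow> real"
  assumes d0: "d 0 = 0"
    and der: "\<And>t. t \<ge> 0 \<Longrightarrow> (d has_real_derivative c t * d t) (at t within {0..})"
    and cc: "continuous_on {0..} c"
  shows "\<forall>t\<ge>0. d t = 0"
proof (intro allI impI)
  fix T :: real assume T: "T \<ge> 0"
  have "bounded (c ` {0..T})"
    by (rule compact_imp_bounded, rule compact_continuous_image,
        rule continuous_on_subset[OF cc], auto)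
  then obtain M where M0: "\<forall>t\<in>{0..T}. \<bar>c t\<bar> \<le> M"
    unfolding bounded_iff by auto
  then have M: "\<And>t. t \<in> {0..T} \<Longrightarrow> \<bar>c t\<bar> \<le> M" by blast
  define f where "f t = (d t)^2 * exp (-2*M*t)" for t
  have dc: "continuous_on {0..} d" by (rule deriv_cont[OF der])
  have fc: "continuous_on {0..T} f" unfolding f_def
    by (intro continuous_intros continuous_on_subset[OF dc]) auto
  have "f 0 \<ge> f T"
  proof (rule DERIV_nonpos_imp_decreasing_open[OF T _ fc])
    fix x assume x: "0 < x" "x < T"
    have dd: "(d has_real_derivative c x * d x) (at x)"
      using within_to_at[OF x(1) der] x by auto
    have "(f has_real_derivative (2 * d x * (c x * d x) * exp (-2*M*x) + (d x)^2 * (exp (-2*M*x) * (-2*M)))) (at x)"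
      unfolding f_def by (auto intro!: derivative_eq_intros dd)
    moreover have "2 * d x * (c x * d x) * exp (-2*M*x) + (d x)^2 * (exp (-2*M*x) * (-2*M))
        = 2 * (d x)^2 * exp (-2*M*x) * (c x - M)"
      by (simp add: algebra_simps power2_eq_square)
    moreover have "2 * (d x)^2 * exp (-2*M*x) * (c x - M) \<le> 0"
    proof -
      have "c x - M \<le> 0" using M[of x] x by auto
      moreover have "2 * (d x)^2 * exp (-2*M*x) \<ge> 0" by simp
      ultimately show ?thesis by (simp add: mult_nonneg_nonpos)
    qed
    ultimately show "\<exists>y. (f has_real_derivative y) (at x) \<and> y \<le> 0" by metis
  qed
  then have "(d T)^2 * exp (-2*M*T) \<le> 0" using d0 by (simp add: f_def)
  then have "(d T)^2 \<le> 0" by (simp add: mult_le_0_iff)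
  then show "d T = 0" by simp
qed




definition Adiff :: "real \<Rightarrow> real \<Rightarrow> real \<Rightarrow> real" where
  "Adiff x y z = 5*(y^4+y^3*z+y^2*z^2+y*z^3+z^4) - 3*x*(y+z)*(y^2+z^2) - 2*x*y*z*(y+z)
     - y^2*z^2 - x^2*y*z + x^3*(y+z) - 3*x^4"

lemma q_diff: "qS3 y z x * y - qS3 z x y * z = (y - z) * Adiff x y z"
  unfolding qS3_def Adiff_def by algebra

lemma p_red: "pS3 x y y = x^2*(x-y)^2"
  unfolding pS3_def by algebra
lemma q_red1: "qS3 x y y = x^2*(5*x-y)*(x-y)"
  unfolding qS3_def by algebra
lemma q_red2: "qS3 y y x = - (x^2*(y-x)*(y-3*x))"
  unfolding qS3_def by algebra
lemma q_red3: "qS3 y x y = - (x^2*(y-x)*(y-3*x))"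
  unfolding qS3_def by algebra


lemma aux1:
  fixes q1 q2 y z A b g :: real
  assumes h: "q1*y - q2*z = (y-z)*A"
  shows "-b*q1*g^2*y - (-b*q2*g^2*z) = (-b*g^2*A)*(y-z)"
proof -
  have "-b*q1*g^2*y - (-b*q2*g^2*z) = -b*g^2*(q1*y - q2*z)" by algebra
  also have "\<dots> = -b*g^2*((y-z)*A)" by (simp add: h)
  also have "\<dots> = (-b*g^2*A)*(y-z)" by algebra
  finally show ?thesis .
qed

lemma pos_lemma:
  fixes g :: "real \<Rightarrow> real"
  assumes "continuous_on {0..} g" "g 0 > 0" "\<And>t. t \<ge> 0 \<Longrightarrow> g t \<noteq> 0"
  shows "\<And>t. t \<ge> 0 \<Longrightarrow> g t > 0"
proof (rule ccontr)
  fix t :: real assume t: "t \<ge> 0" "\<not> g t > 0"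
  have "continuous_on {0..t} g" by (rule continuous_on_subset[OF assms(1)]) auto
  then obtain s where "0 \<le> s" "s \<le> t" "g s = 0"
    using IVT2'[of g t 0 0] t assms(2) by auto
  with assms(3) show False by auto
qed

lemma sol_part1:
  fixes h0 h1 h2 h3 :: real and g0 g1 g2 g3 :: "real \<Rightarrow> real"
  assumes S: "S3_global_solution h0 h1 h2 h3 g0 g1 g2 g3" and h23: "h2 = h3"
  shows "\<forall>t\<ge>0. g2 t = g3 t"
proof -
  define \<beta> where "\<beta> = betaS3 h0 h1 h2 h3"
  have d1: "\<And>t. t \<ge> 0 \<Longrightarrow> (g1 has_real_derivative (- \<beta> * qS3 (g1 t) (g2 t) (g3 t) * (g0 t)^2 * g1 t)) (at t within {0..})"
    and d0: "\<And>t. t \<ge> 0 \<Longrightarrow> (g0 has_real_derivative (- \<beta> * pS3 (g1 t) (g2 t) (g3 t) * (g0 t)^3)) (at t within {0..})"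
    and d2: "\<And>t. t \<ge> 0 \<Longrightarrow> (g2 has_real_derivative (- \<beta> * qS3 (g2 t) (g3 t) (g1 t) * (g0 t)^2 * g2 t)) (at t within {0..})"
    and d3: "\<And>t. t \<ge> 0 \<Longrightarrow> (g3 has_real_derivative (- \<beta> * qS3 (g3 t) (g1 t) (g2 t) * (g0 t)^2 * g3 t)) (at t within {0..})"
    and i: "g0 0 = h0" "g1 0 = h1" "g2 0 = h2" "g3 0 = h3"
    using S unfolding S3_global_solution_def \<beta>_def by auto
  have c0: "continuous_on {0..} g0" by (rule deriv_cont[OF d0])
  have c1: "continuous_on {0..} g1" by (rule deriv_cont[OF d1])
  have c2: "continuous_on {0..} g2" by (rule deriv_cont[OF d2])
  have c3: "continuous_on {0..} g3" by (rule deriv_cont[OF d3])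
  show ?thesis
  proof -
    have "\<forall>t\<ge>0. (\<lambda>t. g2 t - g3 t) t = 0"
    proof (rule lin_unique[where c = "\<lambda>t. - \<beta> * (g0 t)^2 * Adiff (g1 t) (g2 t) (g3 t)"])
      show "g2 0 - g3 0 = 0" using i h23 by simp
    next
      fix t :: real assume t: "t \<ge> 0"
      have "((\<lambda>t. g2 t - g3 t) has_real_derivative
          (- \<beta> * qS3 (g2 t) (g3 t) (g1 t) * (g0 t)^2 * g2 t) - (- \<beta> * qS3 (g3 t) (g1 t) (g2 t) * (g0 t)^2 * g3 t))
          (at t within {0..})"
        by (rule DERIV_diff[OF d2[OF t] d3[OF t]])
      moreover have "(- \<beta> * qS3 (g2 t) (g3 t) (g1 t) * (g0 t)^2 * g2 t) - (- \<beta> * qS3 (g3 t) (g1 t) (g2 t) * (g0 t)^2 * g3 t)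
          = (- \<beta> * (g0 t)^2 * Adiff (g1 t) (g2 t) (g3 t)) * (g2 t - g3 t)"
        by (rule aux1[OF q_diff])
      ultimately show "((\<lambda>t. g2 t - g3 t) has_real_derivative
          (- \<beta> * (g0 t)^2 * Adiff (g1 t) (g2 t) (g3 t)) * (g2 t - g3 t)) (at t within {0..})"
        by simp
    next
      show "continuous_on {0..} (\<lambda>t. - \<beta> * (g0 t)^2 * Adiff (g1 t) (g2 t) (g3 t))"
        unfolding Adiff_def by (intro continuous_intros c0 c1 c2 c3)
    qed
    then show ?thesis by simp
  qed
qed


lemma P_deriv:
  fixes g0 g1 g2 :: "real \<Rightarrow> real" and t \<beta> :: real
  assumes d0': "(g0 has_real_derivative (-\<beta>*((g1 t)^2*(g1 t - g2 t)^2)*(g0 t)^3)) (at t within {0..})"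
  and d1': "(g1 has_real_derivative (-\<beta>*((g1 t)^2*(5*g1 t - g2 t)*(g1 t - g2 t))*(g0 t)^2*g1 t)) (at t within {0..})"
  and d2': "(g2 has_real_derivative (\<beta>*((g1 t)^2*(g2 t - g1 t)*(g2 t - 3*g1 t))*(g0 t)^2*g2 t)) (at t within {0..})"
  shows "((\<lambda>s. g0 s * g1 s * (g2 s)^2) has_real_derivative 0) (at t within {0..})"
  apply (rule derivative_eq_intros d0' d1' d2' refl)+
  apply (simp add: algebra_simps power2_eq_square power3_eq_cube)
  done

lemma K_deriv:
  fixes g0 g1 g2 :: "real \<Rightarrow> real" and t \<beta> D :: real
  assumes d0': "(g0 has_real_derivative (-\<beta>*((g1 t)^2*(g1 t - g2 t)^2)*(g0 t)^3)) (at t within {0..})"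
  and d2': "(g2 has_real_derivative (\<beta>*((g1 t)^2*(g2 t - g1 t)*(g2 t - 3*g1 t))*(g0 t)^2*g2 t)) (at t within {0..})"
  and hD: "g0 t * g1 t * (g2 t)^2 = D"
  shows "((\<lambda>s. (g0 s * (g2 s)^3 - 4 * D) * (g0 s)^3 * g2 s) has_real_derivative 0) (at t within {0..})"
  apply (rule derivative_eq_intros d0' d2' refl)+
  apply (simp add: hD[symmetric] algebra_simps power2_eq_square power3_eq_cube)
  done


lemma root4_bound:
  fixes w c :: real
  assumes "0 < w" "w^4 \<le> c"
  shows "w \<le> max 1 c"
proof (cases "w \<le> 1")
  case True then show ?thesis by simp
next
  case False
  then have "w \<le> w^4" by (simp add: self_le_power)
  then show ?thesis using assms by simp
qed

lemma sol_part2: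
  fixes h0 h1 h2 h3 :: real and g0 g1 g2 g3 :: "real \<Rightarrow> real"
  assumes h: "h0 > 0" "h1 > 0" "h2 > 0" "h3 > 0" "4 * h1 < h2" "h2 = h3"
    and S: "S3_global_solution h0 h1 h2 h3 g0 g1 g2 g3"
  shows "(\<forall>t\<ge>0. g2 t = g3 t) \<and>
            strict_mono_on {0..} g2 \<and> strict_mono_on {0..} g3 \<and>
            (g0 \<longlongrightarrow> 0) at_top \<and> (g1 \<longlongrightarrow> 0) at_top \<and>
            filterlim g2 at_top at_top \<and> filterlim g3 at_top at_top \<and>
            (\<forall>t\<ge>0. (g0 t * (g2 t)^3 - 4 * detS3 h0 h1 h2 h3) * (g0 t)^3 * g2 t
                    = (h0 * h2^3 - 4 * detS3 h0 h1 h2 h3) * h0^3 * h2)"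
proof -
  define \<beta> where "\<beta> = betaS3 h0 h1 h2 h3"
  define D where "D = detS3 h0 h1 h2 h3"
  have Dv: "D = h0*h1*h2^2" using h(6) by (simp add: D_def detS3_def power2_eq_square)
  have Dpos: "D > 0" using h by (simp add: Dv)
  have \<beta>v: "\<beta> = 1/(6*D^2)" by (simp add: \<beta>_def D_def betaS3_def)
  have \<beta>pos: "\<beta> > 0" using Dpos by (simp add: \<beta>v)
  have eq23: "\<forall>t\<ge>0. g2 t = g3 t" using sol_part1[OF S h(6)] .
  have d1: "\<And>t. t \<ge> 0 \<Longrightarrow> (g1 has_real_derivative (- \<beta> * qS3 (g1 t) (g2 t) (g3 t) * (g0 t)^2 * g1 t)) (at t within {0..})"
    and d0: "\<And>t. t \<ge> 0 \<Longrightarrow> (g0 has_real_derivative (- \<beta> * pS3 (g1 t) (g2 t) (g3 t) * (g0 t)^3)) (at t within {0..})"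
    and d2: "\<And>t. t \<ge> 0 \<Longrightarrow> (g2 has_real_derivative (- \<beta> * qS3 (g2 t) (g3 t) (g1 t) * (g0 t)^2 * g2 t)) (at t within {0..})"
    and i: "g0 0 = h0" "g1 0 = h1" "g2 0 = h2" "g3 0 = h3"
    using S unfolding S3_global_solution_def \<beta>_def by auto
  have d0': "\<And>t. t \<ge> 0 \<Longrightarrow> (g0 has_real_derivative (-\<beta>*((g1 t)^2*(g1 t - g2 t)^2)*(g0 t)^3)) (at t within {0..})"
  proof -
    fix t :: real assume t: "t \<ge> 0"
    have e: "g3 t = g2 t" using eq23 t by simp
    show "?thesis t" by (rule DERIV_cong[OF d0[OF t]]) (simp add: e p_red)
  qed
  have d1': "\<And>t. t \<ge> 0 \<Longrightarrow> (g1 has_real_derivative (-\<beta>*((g1 t)^2*(5*g1 t - g2 t)*(g1 t - g2 t))*(g0 t)^2*g1 t)) (at t within {0..})"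
  proof -
    fix t :: real assume t: "t \<ge> 0"
    have e: "g3 t = g2 t" using eq23 t by simp
    show "?thesis t" by (rule DERIV_cong[OF d1[OF t]]) (simp add: e q_red1)
  qed
  have d2': "\<And>t. t \<ge> 0 \<Longrightarrow> (g2 has_real_derivative (\<beta>*((g1 t)^2*(g2 t - g1 t)*(g2 t - 3*g1 t))*(g0 t)^2*g2 t)) (at t within {0..})"
  proof -
    fix t :: real assume t: "t \<ge> 0"
    have e: "g3 t = g2 t" using eq23 t by simp
    show "?thesis t" by (rule DERIV_cong[OF d2[OF t]]) (simp add: e q_red2)
  qed
  have c0: "continuous_on {0..} g0" by (rule deriv_cont[OF d0'])
  have c1: "continuous_on {0..} g1" by (rule deriv_cont[OF d1'])
  have c2: "continuous_on {0..} g2" by (rule deriv_cont[OF d2'])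
  have cons: "\<forall>t\<ge>0. g0 t * g1 t * (g2 t)^2 = D"
  proof -
    have "\<forall>t\<ge>0. (\<lambda>s. g0 s * g1 s * (g2 s)^2) t = (\<lambda>s. g0 s * g1 s * (g2 s)^2) 0"
      by (rule const_from_deriv, rule P_deriv[OF d0' d1' d2'])
    then show ?thesis using i by (simp add: Dv)
  qed
  define K0 where "K0 = (h0 * h2^3 - 4 * D) * h0^3 * h2"
  have Kc: "\<forall>t\<ge>0. (g0 t * (g2 t)^3 - 4 * D) * (g0 t)^3 * g2 t = K0"
  proof -
    have "\<forall>t\<ge>0. (\<lambda>s. (g0 s * (g2 s)^3 - 4 * D) * (g0 s)^3 * g2 s) t
       = (\<lambda>s. (g0 s * (g2 s)^3 - 4 * D) * (g0 s)^3 * g2 s) 0"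
      by (rule const_from_deriv, rule K_deriv[OF d0' d2'], use cons in auto)
    then show ?thesis using i by (simp add: K0_def)
  qed
  have nz: "\<And>t. t \<ge> 0 \<Longrightarrow> g0 t \<noteq> 0 \<and> g1 t \<noteq> 0 \<and> g2 t \<noteq> 0"
    using cons Dpos by fastforce
  have p0: "\<And>t. t \<ge> 0 \<Longrightarrow> g0 t > 0" by (rule pos_lemma[OF c0]) (use i h nz in auto)
  have p1: "\<And>t. t \<ge> 0 \<Longrightarrow> g1 t > 0" by (rule pos_lemma[OF c1]) (use i h nz in auto)
  have p2: "\<And>t. t \<ge> 0 \<Longrightarrow> g2 t > 0" by (rule pos_lemma[OF c2]) (use i h nz in auto)
  have K0pos: "K0 > 0"
  proof -
    have "h0 * h2^3 - 4 * D = h0*h2^2*(h2 - 4*h1)" by (simp add: Dv algebra_simps power2_eq_square power3_eq_cube)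
    also have "\<dots> > 0" using h by simp
    finally show ?thesis using h by (simp add: K0_def)
  qed
  have y4x: "\<And>t. t \<ge> 0 \<Longrightarrow> 4 * g1 t < g2 t"
  proof -
    fix t :: real assume t: "t \<ge> 0"
    define G X Y where "G = g0 t" "X = g1 t" "Y = g2 t"
    have pos: "G > 0" "X > 0" "Y > 0" using p0 p1 p2 t by (auto simp: G_X_Y_def)
    have k: "(G * Y^3 - 4 * D) * G^3 * Y = K0" using Kc t by (simp add: G_X_Y_def)
    have dd: "G*X*Y^2 = D" using cons t by (simp add: G_X_Y_def)
    have "(G * Y^3 - 4 * D) * (G^3 * Y) > 0" using k K0pos by (simp add: mult.assoc)
    moreover have "G^3 * Y > 0" using pos by simp
    ultimately have "G * Y^3 - 4 * D > 0" by (auto simp: zero_less_mult_iff)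
    then have "G * Y^2 * (Y - 4 * X) > 0" by (simp add: dd[symmetric] algebra_simps power2_eq_square power3_eq_cube)
    moreover have "G * Y^2 > 0" using pos by simp
    ultimately have "Y - 4*X > 0" by (auto simp: zero_less_mult_iff)
    then show "4 * g1 t < g2 t" by (simp add: G_X_Y_def)
  qed
  have dpos: "\<And>t. t \<ge> 0 \<Longrightarrow> \<beta>*((g1 t)^2*(g2 t - g1 t)*(g2 t - 3*g1 t))*(g0 t)^2*g2 t > 0"
  proof -
    fix t :: real assume t: "t \<ge> 0"
    have "g2 t - g1 t > 0" "g2 t - 3*g1 t > 0" using y4x[OF t] p1[OF t] by auto
    then show "?thesis t" using \<beta>pos p0[OF t] p1[OF t] p2[OF t] by simp
  qed
  have mono2: "strict_mono_on {0..} g2"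
  proof (rule strict_mono_onI)
    fix s t :: real assume st: "s \<in> {0..}" "t \<in> {0..}" "s < t"
    show "g2 s < g2 t"
    proof (rule DERIV_pos_imp_increasing_open[OF st(3)])
      fix x assume x: "s < x" "x < t"
      then have x0: "x > 0" using st by auto
      show "\<exists>y. (g2 has_real_derivative y) (at x) \<and> y > 0"
        using within_to_at[OF x0 d2'] dpos x0 by auto
    next
      show "continuous_on {s..t} g2" by (rule continuous_on_subset[OF c2]) (use st in auto)
    qed
  qed
  have mono3: "strict_mono_on {0..} g3"
    using mono2 eq23 unfolding strict_mono_on_def by (metis atLeast_iff)
  have grow: "\<And>t. t \<ge> 0 \<Longrightarrow> (g2 t)^2 \<ge> t/16"
  proof -
    fix t :: real assume t: "t \<ge> 0"
    have "(\<lambda>s. (g2 s)^2 - s/16) 0 \<le> (\<lambda>s. (g2 s)^2 - s/16) t"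
    proof (rule DERIV_nonneg_imp_increasing_open[OF t])
      fix x :: real assume x: "0 < x" "x < t"
      define G X Y where "G = g0 x" "X = g1 x" "Y = g2 x"
      have pos: "G > 0" "X > 0" "Y > 0" using p0 p1 p2 x by (auto simp: G_X_Y_def)
      have dd: "G*X*Y^2 = D" using cons x by (simp add: G_X_Y_def)
      have yx: "4*X < Y" using y4x x by (simp add: G_X_Y_def)
      have der: "((\<lambda>s. (g2 s)^2 - s/16) has_real_derivative
          (2 * Y * (\<beta>*(X^2*(Y - X)*(Y - 3*X))*G^2*Y) - 1/16)) (at x)"
        unfolding G_X_Y_def
        by (rule derivative_eq_intros within_to_at[OF x(1) d2'] refl | simp add: x(1) less_imp_le)+
      have "2 * Y * (\<beta>*(X^2*(Y - X)*(Y - 3*X))*G^2*Y) = (Y - X)*(Y - 3*X)/(3*Y^2)"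
        using pos by (simp add: \<beta>v dd[symmetric] field_simps power2_eq_square)
      moreover have "(Y - X)*(Y - 3*X)/(3*Y^2) \<ge> 1/16"
      proof -
        have "(Y - 4*X)*(13*Y - 12*X) \<ge> 0" using yx pos by simp
        then have "3*Y^2 \<le> 16*((Y - X)*(Y - 3*X))" by (simp add: algebra_simps power2_eq_square)
        then show ?thesis using pos by (simp add: field_simps)
      qed
      ultimately show "\<exists>y. ((\<lambda>s. (g2 s)^2 - s/16) has_real_derivative y) (at x) \<and> y \<ge> 0"
        using der by (intro exI[of _ "2 * Y * (\<beta>*(X^2*(Y - X)*(Y - 3*X))*G^2*Y) - 1/16"]) auto
    next
      show "continuous_on {0..t} (\<lambda>s. (g2 s)^2 - s/16)"
        by (intro continuous_intros continuous_on_subset[OF c2]) auto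
    qed
    then have "h2^2 \<le> (g2 t)^2 - t/16" using i by simp
    then show "(g2 t)^2 \<ge> t/16" using zero_le_power2[of h2] by linarith
  qed
  have ev23: "\<And>Z. eventually (\<lambda>t. Z \<le> g2 t \<and> Z \<le> g3 t) at_top"
  proof -
    fix Z :: real
    show "eventually (\<lambda>t. Z \<le> g2 t \<and> Z \<le> g3 t) at_top"
      unfolding eventually_at_top_linorder
    proof (intro exI[of _ "16*Z^2"] allI impI)
      fix t assume t: "16*Z^2 \<le> t"
      then have t0: "t \<ge> 0" by (smt (verit) zero_le_power2)
      have "Z^2 \<le> (g2 t)^2" using grow[OF t0] t by simp
      then have "Z \<le> g2 t" using p2[OF t0] by (metis power2_le_imp_le less_imp_le)
      then show "Z \<le> g2 t \<and> Z \<le> g3 t" using eq23 t0 by simp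
    qed
  qed
  have lim2: "filterlim g2 at_top at_top" unfolding filterlim_at_top
  proof
    fix Z :: real show "eventually (\<lambda>t. Z \<le> g2 t) at_top"
      using ev23[of Z] by (rule eventually_mono) simp
  qed
  have lim3: "filterlim g3 at_top at_top" unfolding filterlim_at_top
  proof
    fix Z :: real show "eventually (\<lambda>t. Z \<le> g3 t) at_top"
      using ev23[of Z] by (rule eventually_mono) simp
  qed
  have xyb: "\<And>t. t \<ge> 0 \<Longrightarrow> g1 t * g2 t \<le> max 1 (D^4/K0)"
  proof -
    fix t :: real assume t: "t \<ge> 0"
    define G X Y where "G = g0 t" "X = g1 t" "Y = g2 t"
    have pos: "G > 0" "X > 0" "Y > 0" using p0 p1 p2 t by (auto simp: G_X_Y_def)
    have k: "(G * Y^3 - 4 * D) * G^3 * Y = K0" using Kc t by (simp add: G_X_Y_def)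
    have dd: "G*X*Y^2 = D" using cons t by (simp add: G_X_Y_def)
    have "K0 = G^4*Y^4 - 4*D*G^3*Y" using k by (simp add: algebra_simps power3_eq_cube power4_eq_xxxx)
    moreover have "4*D*G^3*Y \<ge> 0" using pos Dpos by simp
    ultimately have "K0 \<le> G^4*Y^4" by linarith
    then have "K0 * (X*Y)^4 \<le> G^4*Y^4 * (X*Y)^4" using pos by (simp add: mult_right_mono)
    also have "\<dots> = D^4" by (simp add: dd[symmetric] power_mult_distrib algebra_simps power4_eq_xxxx power2_eq_square)
    finally have "(X*Y)^4 \<le> D^4/K0" using K0pos by (simp add: pos_le_divide_eq mult.commute)
    then show "g1 t * g2 t \<le> max 1 (D^4/K0)" using root4_bound[of "X*Y"] pos by (simp add: G_X_Y_def)
  qed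
  define B where "B = max 1 (D^4/K0)"
  have Bpos: "B > 0" by (simp add: B_def)
  have gyb: "\<And>t. t \<ge> 0 \<Longrightarrow> g2 t \<ge> 8*B \<Longrightarrow> g2 t \<ge> 1 \<Longrightarrow> g0 t * g2 t \<le> max 1 (2*K0)"
  proof -
    fix t :: real assume t: "t \<ge> 0" and yb: "g2 t \<ge> 8*B" "g2 t \<ge> 1"
    define G X Y where "G = g0 t" "X = g1 t" "Y = g2 t"
    have pos: "G > 0" "X > 0" "Y > 0" using p0 p1 p2 t by (auto simp: G_X_Y_def)
    have k: "(G * Y^3 - 4 * D) * G^3 * Y = K0" using Kc t by (simp add: G_X_Y_def)
    have dd: "G*X*Y^2 = D" using cons t by (simp add: G_X_Y_def)
    have xy: "X*Y \<le> B" using xyb[OF t] by (simp add: B_def G_X_Y_def)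
    have "8*(X*Y) \<le> Y * 1" using xy yb(1) unfolding G_X_Y_def by linarith
    then have "8*X*Y \<le> Y * 1" by (simp add: mult.assoc)
    also have "\<dots> \<le> Y * Y" using yb pos by (simp add: G_X_Y_def)
    finally have y8: "8*X \<le> Y" using pos by simp
    have "G * Y^3 - 4 * D = G*Y^2*(Y - 4*X)" by (simp add: dd[symmetric] algebra_simps power2_eq_square power3_eq_cube)
    also have "\<dots> \<ge> G*Y^2*(Y/2)" using y8 pos by (intro mult_left_mono) auto
    finally have "G * Y^3 - 4 * D \<ge> G*Y^2*(Y/2)" .
    then have "(G*Y^2*(Y/2)) * (G^3*Y) \<le> (G * Y^3 - 4 * D) * (G^3*Y)"
      using pos by (intro mult_right_mono) auto
    then have "(G*Y)^4 \<le> 2*K0" using k by (simp add: algebra_simps power4_eq_xxxx power2_eq_square power3_eq_cube)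
    then show "g0 t * g2 t \<le> max 1 (2*K0)" using root4_bound[of "G*Y"] pos by (simp add: G_X_Y_def)
  qed
  have lim1: "(g1 \<longlongrightarrow> 0) at_top"
  proof (rule tendsto_sandwich[of "\<lambda>_. 0" _ _ "\<lambda>t. B / g2 t"])
    show "eventually (\<lambda>t. 0 \<le> g1 t) at_top" unfolding eventually_at_top_linorder
      using p1 by (intro exI[of _ 0]) (auto intro: less_imp_le)
    show "eventually (\<lambda>t. g1 t \<le> B / g2 t) at_top" unfolding eventually_at_top_linorder
    proof (intro exI[of _ 0] allI impI)
      fix t :: real assume t: "t \<ge> 0"
      show "g1 t \<le> B / g2 t" using xyb[OF t] p2[OF t] by (simp add: B_def pos_le_divide_eq)
    qed
    show "((\<lambda>_. 0) \<longlongrightarrow> (0::real)) at_top" by simp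
    show "((\<lambda>t. B / g2 t) \<longlongrightarrow> 0) at_top"
      by (rule tendsto_divide_0[OF tendsto_const filterlim_at_top_imp_at_infinity[OF lim2]])
  qed
  have lim0: "(g0 \<longlongrightarrow> 0) at_top"
  proof (rule tendsto_sandwich[of "\<lambda>_. 0" _ _ "\<lambda>t. max 1 (2*K0) / g2 t"])
    show "eventually (\<lambda>t. 0 \<le> g0 t) at_top" unfolding eventually_at_top_linorder
      using p0 by (intro exI[of _ 0]) (auto intro: less_imp_le)
    have "eventually (\<lambda>t. max 1 (8*B) \<le> g2 t) at_top" using lim2 unfolding filterlim_at_top by blast
    moreover have "eventually (\<lambda>t::real. t \<ge> 0) at_top" using eventually_ge_at_top[of "0::real"] by simp
    ultimately show "eventually (\<lambda>t. g0 t \<le> max 1 (2*K0) / g2 t) at_top"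
    proof (rule eventually_elim2)
      fix t :: real assume "max 1 (8*B) \<le> g2 t" "t \<ge> 0"
      then show "g0 t \<le> max 1 (2*K0) / g2 t" using gyb[of t] p2[of t] by (simp add: pos_le_divide_eq)
    qed
    show "((\<lambda>_. 0) \<longlongrightarrow> (0::real)) at_top" by simp
    show "((\<lambda>t. max 1 (2*K0) / g2 t) \<longlongrightarrow> 0) at_top"
      by (rule tendsto_divide_0[OF tendsto_const filterlim_at_top_imp_at_infinity[OF lim2]])
  qed
  show ?thesis using eq23 mono2 mono3 lim0 lim1 lim2 lim3 Kc by (simp add: K0_def D_def)


qed




lemma alg_g2:
  fixes U Y D :: real
  assumes "0 < U" "U < 1" "Y > 0" "D > 0"
  shows "(1+3*U^4)*(3+U^4)/(96*Y) = - (1/(6*D^2)) * qS3 Y Y ((1-U^4)/4*Y) * (D/((1-U^4)/4*Y^3))^2 * Y"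
proof -
  have u4: "U^4 < 1" using assms by (simp add: power_less_one_iff)
  show ?thesis using assms u4 unfolding q_red2 by (simp add: field_simps) algebra
qed

lemma alg_g1:
  fixes U Y D :: real
  assumes "0 < U" "U < 1" "Y > 0" "D > 0"
  shows "-(U^4*(1-U^4)*(3+U^4))/(48*Y^2) * Y + (1-U^4)/4 * ((1+3*U^4)*(3+U^4)/(96*Y))
     = - (1/(6*D^2)) * qS3 ((1-U^4)/4*Y) Y Y * (D/((1-U^4)/4*Y^3))^2 * ((1-U^4)/4*Y)"
proof -
  have u4: "U^4 < 1" using assms by (simp add: power_less_one_iff)
  show ?thesis using assms u4 unfolding q_red1 by (simp add: field_simps) algebra
qed

lemma alg_g0:
  fixes U Y D :: real
  assumes "0 < U" "U < 1" "Y > 0" "D > 0"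
  shows "- D * (-(U^4*(1-U^4)*(3+U^4))/(48*Y^2) * Y^3 + (1-U^4)/4 * (3*Y^2*((1+3*U^4)*(3+U^4)/(96*Y)))) / ((1-U^4)/4*Y^3)^2
     = - (1/(6*D^2)) * pS3 ((1-U^4)/4*Y) Y Y * (D/((1-U^4)/4*Y^3))^3"
proof -
  have u4: "U^4 < 1" using assms by (simp add: power_less_one_iff)
  show ?thesis using assms u4 unfolding p_red by (simp add: field_simps) algebra
qed




lemma scalar_ode:
  fixes \<phi> :: "real \<Rightarrow> real" and k u0 :: real
  assumes cont: "\<And>b. 0 \<le> b \<Longrightarrow> b < 1 \<Longrightarrow> continuous_on {0..b} \<phi>"
    and pos: "\<And>v. 0 \<le> v \<Longrightarrow> v < 1 \<Longrightarrow> \<phi> v > 0"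
    and low: "\<And>v. 0 \<le> v \<Longrightarrow> v < 1 \<Longrightarrow> \<phi> v \<ge> k/(1-v)^2"
    and k: "k > 0" and u0: "0 < u0" "u0 < 1"
  shows "\<exists>u. u 0 = u0 \<and> (\<forall>t\<ge>0. 0 < u t \<and> u t < 1 \<and> (u has_real_derivative inverse (\<phi> (u t))) (at t))"
proof -
  define T where "T v = integral {0..v} \<phi>" for v
  have TDw: "\<And>b x. 0 \<le> b \<Longrightarrow> b < 1 \<Longrightarrow> x \<in> {0..b} \<Longrightarrow> (T has_real_derivative \<phi> x) (at x within {0..b})"
    unfolding T_def by (rule integral_has_real_derivative[OF cont])
  have TD: "\<And>v. 0 < v \<Longrightarrow> v < 1 \<Longrightarrow> (T has_real_derivative \<phi> v) (at v)"
  proof -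
    fix v :: real assume v: "0 < v" "v < 1"
    define b where "b = (1+v)/2"
    have b: "0 \<le> b" "b < 1" "v < b" using v by (auto simp: b_def)
    have "v \<in> interior {0..b}" using v b by simp
    then have "at v within {0..b} = at v" by (rule at_within_interior)
    then show "(T has_real_derivative \<phi> v) (at v)" using TDw[OF b(1,2), of v] v b by simp
  qed
  have Tcont: "\<And>b. 0 \<le> b \<Longrightarrow> b < 1 \<Longrightarrow> continuous_on {0..b} T"
    unfolding continuous_on_eq_continuous_within using TDw DERIV_continuous by blast
  have T0: "T 0 = 0" by (simp add: T_def)
  have Tmono: "\<And>v w. 0 \<le> v \<Longrightarrow> v < w \<Longrightarrow> w < 1 \<Longrightarrow> T v < T w"
  proof -
    fix v w :: real assume vw: "0 \<le> v" "v < w" "w < 1"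
    show "T v < T w"
    proof (rule DERIV_pos_imp_increasing_open[OF vw(2)])
      fix x assume x: "v < x" "x < w"
      show "\<exists>y. (T has_real_derivative y) (at x) \<and> y > 0"
        using TD[of x] pos[of x] x vw by auto
    next
      show "continuous_on {v..w} T" by (rule continuous_on_subset[OF Tcont[of w]]) (use vw in auto)
    qed
  qed
  have Tlow: "\<And>v. 0 \<le> v \<Longrightarrow> v < 1 \<Longrightarrow> T v \<ge> k/(1-v) - k"
  proof -
    fix v :: real assume v: "0 \<le> v" "v < 1"
    have "(\<lambda>x. T x - k/(1-x)) 0 \<le> (\<lambda>x. T x - k/(1-x)) v"
    proof (rule DERIV_nonneg_imp_increasing_open[OF v(1)])
      fix x assume x: "0 < x" "x < v"
      have "((\<lambda>x. T x - k/(1-x)) has_real_derivative (\<phi> x - k/(1-x)^2)) (at x)"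
        using x v by (auto intro!: derivative_eq_intros TD simp: power2_eq_square field_simps)
      moreover have "\<phi> x - k/(1-x)^2 \<ge> 0" using low[of x] x v by auto
      ultimately show "\<exists>y. ((\<lambda>x. T x - k/(1-x)) has_real_derivative y) (at x) \<and> y \<ge> 0" by blast
    next
      show "continuous_on {0..v} (\<lambda>x. T x - k/(1-x))"
        using v by (intro continuous_intros Tcont) auto
    qed
    then show "T v \<ge> k/(1-v) - k" using T0 by simp
  qed
  have ex: "\<And>s. s \<ge> 0 \<Longrightarrow> \<exists>v. 0 \<le> v \<and> v < 1 \<and> T v = s"
  proof -
    fix s :: real assume s: "s \<ge> 0"
    define w where "w = s/(s+k)"
    have w: "0 \<le> w" "w < 1" using s k by (auto simp: w_def)
    have "k/(1-w) - k = s" using s k by (simp add: w_def field_simps)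
    then have "T w \<ge> s" using Tlow[OF w] by simp
    then obtain v where "0 \<le> v" "v \<le> w" "T v = s"
      using IVT'[of T 0 s w] T0 s w Tcont[OF w] by auto
    then show "\<exists>v. 0 \<le> v \<and> v < 1 \<and> T v = s" using w by auto
  qed
  have uniq: "\<And>v w. 0 \<le> v \<Longrightarrow> v < 1 \<Longrightarrow> 0 \<le> w \<Longrightarrow> w < 1 \<Longrightarrow> T v = T w \<Longrightarrow> v = w"
    by (metis Tmono less_irrefl linorder_neqE_linordered_idom)
  define U where "U s = (THE v. 0 \<le> v \<and> v < 1 \<and> T v = s)" for s
  have Uprop: "\<And>s. s \<ge> 0 \<Longrightarrow> 0 \<le> U s \<and> U s < 1 \<and> T (U s) = s"
  proof -
    fix s :: real assume s: "s \<ge> 0"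
    have "\<exists>!v. 0 \<le> v \<and> v < 1 \<and> T v = s" using ex[OF s] uniq by blast
    then show "0 \<le> U s \<and> U s < 1 \<and> T (U s) = s" unfolding U_def by (rule theI')
  qed
  have UT: "\<And>v. 0 \<le> v \<Longrightarrow> v < 1 \<Longrightarrow> U (T v) = v"
  proof -
    fix v :: real assume v: "0 \<le> v" "v < 1"
    have Tv: "T v \<ge> 0" using T0 Tmono[of 0 v] v by (cases "v = 0") auto
    show "U (T v) = v" using Uprop[OF Tv] uniq[of "U (T v)" v] v by auto
  qed
  have Upos: "\<And>s. s > 0 \<Longrightarrow> 0 < U s"
    using Uprop T0 by (metis less_eq_real_def less_irrefl)
  have UD: "\<And>s. s > 0 \<Longrightarrow> (U has_real_derivative inverse (\<phi> (U s))) (at s)"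
  proof -
    fix s :: real assume s: "s > 0"
    have us: "0 < U s" "U s < 1" using Upos[OF s] Uprop[of s] s by auto
    have ic: "isCont U (T (U s))"
    proof (rule isCont_inverse_function2[where a="U s / 2" and b="(U s + 1)/2" and f=T and g=U and x="U s"])
      show "U s / 2 < U s" "U s < (U s + 1)/2" using us by auto
      fix z assume z: "U s / 2 \<le> z" "z \<le> (U s + 1) / 2"
      then have z': "0 < z" "z < 1" using us by auto
      show "U (T z) = z" using UT z' by auto
      show "isCont T z" using TD[OF z'] DERIV_isCont by blast
    qed
    have ic': "isCont U s" using ic Uprop[of s] s by simp
    show "(U has_real_derivative inverse (\<phi> (U s))) (at s)"
    proof (rule DERIV_inverse_function[where f=T and g=U and a=0 and b="s+1"])
      show "(T has_real_derivative \<phi> (U s)) (at (U s))" using TD us by auto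
      show "\<phi> (U s) \<noteq> 0" using pos[of "U s"] us by auto
      show "0 < s" "s < s + 1" using s by auto
      fix y :: real assume "0 < y" "y < s + 1"
      then show "T (U y) = y" using Uprop[of y] by auto
    next
      show "isCont U s" by (rule ic')
    qed
  qed
  define c0 where "c0 = T u0"
  have c0: "c0 > 0" using Tmono[of 0 u0] u0 T0 by (auto simp: c0_def)
  show ?thesis
  proof (intro exI[of _ "\<lambda>t. U (t + c0)"] conjI allI impI)
    show "U (0 + c0) = u0" using UT[of u0] u0 by (simp add: c0_def)
    fix t :: real assume t: "t \<ge> 0"
    have tc: "t + c0 > 0" using t c0 by simp
    show "0 < U (t + c0)" by (rule Upos[OF tc])
    show "U (t + c0) < 1" using Uprop[of "t + c0"] tc by auto
    have "((\<lambda>t. U (t + c0)) has_real_derivative inverse (\<phi> (U (t + c0))) * 1) (at t)"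
      by (rule DERIV_chain2[where f=U and g="\<lambda>t. t + c0", OF UD[OF tc]]) (auto intro!: derivative_eq_intros)
    then show "((\<lambda>t. U (t + c0)) has_real_derivative inverse (\<phi> (U (t + c0)))) (at t)" by simp
  qed
qed




lemma phi_low:
  fixes v a :: real
  assumes v: "0 \<le> v" "v < 1" and a: "a > 0"
  shows "48*a/((1-v^4)^2*(3+v^4)) \<ge> (3*a/4)/(1-v)^2"
proof -
  have f: "1 - v^4 = (1-v)*((1+v)*(1+v^2))" by algebra
  have b1: "(1+v)*(1+v^2) \<le> 4"
  proof -
    have "v^2 \<le> 1" using v by (simp add: power_le_one)
    then have "(1+v)*(1+v^2) \<le> 2*2" using v by (intro mult_mono) auto
    then show ?thesis by simp
  qed
  have b0: "0 < (1+v)*(1+v^2)" using v by (simp add: add_pos_nonneg)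
  have l1: "0 < 1 - v^4" using v f b0 by simp
  have "(1-v)*((1+v)*(1+v^2)) \<le> (1-v)*4" using b1 v by (intro mult_left_mono) auto
  then have l2: "1 - v^4 \<le> 4*(1-v)" using f by linarith
  have sq: "(1-v^4)^2 \<le> (4*(1-v))^2" using l1 l2 by (intro power_mono) auto
  have v4: "v^4 \<le> 1" using v by (simp add: power_le_one)
  have "(1-v^4)^2*(3+v^4) \<le> (4*(1-v))^2 * 4" using sq v4 by (intro mult_mono) auto
  moreover have "0 < (1-v^4)^2*(3+v^4)" using l1 by (simp add: add_pos_nonneg)
  moreover have "0 < (4*(1-v))^2 * 4" using v by simp
  moreover have "0 < 3 + v^4" using v by (simp add: add_pos_nonneg)
  ultimately have "48*a/((4*(1-v))^2 * 4) \<le> 48*a/((1-v^4)^2*(3+v^4))"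
    using a by (intro divide_left_mono mult_pos_pos) auto
  moreover have "48*a/((4*(1-v))^2 * 4) = (3*a/4)/(1-v)^2"
  proof -
    have e: "(4*(1-v))^2*4 = 64*(1-v)^2" by algebra
    have nz: "(1-v)^2 \<noteq> 0" using v by simp
    have g: "\<And>X::real. X \<noteq> 0 \<Longrightarrow> 48*a/(64*X) = (3*a/4)/X" by (simp add: field_simps)
    show ?thesis unfolding e by (rule g[OF nz])
  qed
  ultimately show ?thesis by simp
qed

lemma u4_lt1: "0 \<le> (v::real) \<Longrightarrow> v < 1 \<Longrightarrow> v^4 < 1"
  by (simp add: power_less_one_iff)




lemma alg_dZ:
  fixes W U a :: real assumes "W \<noteq> 0" "a \<noteq> 0" "W = 1 - U^4"
  shows "((0 * U + W^2*(3+U^4)/(48*a) * a) * W - a * U * (0 - real 4 * (W^2*(3+U^4)/(48*a) * U^(4 - Suc 0)))) / (W*W) = (1+3*U^4)*(3+U^4)/48"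
proof -
  have e: "U * U^3 = U^4" by algebra
  have "((0 * U + W^2*(3+U^4)/(48*a) * a) * W - a * U * (0 - real 4 * (W^2*(3+U^4)/(48*a) * U^(4 - Suc 0))))
     = W^2*(3+U^4)/48 * (W + 4*(U * U^3))" using assms(2) by (simp add: field_simps)
  also have "\<dots> = W^2*(3+U^4)*(1+3*U^4)/48" by (simp add: e assms(3) algebra_simps)
  finally show ?thesis using assms(1) by (simp add: power2_eq_square)
qed

lemma alg_dR:
  fixes W U a Y :: real assumes "W \<noteq> 0" "a \<noteq> 0" "U \<noteq> 0" "Y^2 = a*U/W"
  shows "((0 - real 4 * (W^2*(3+U^4)/(48*a) * U^(4 - Suc 0))) * 4 - (1 - U^4) * 0) / (4*4) = -(U^4*W*(3+U^4))/(48*Y^2)"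
proof -
  have e: "U * U^3 = U^4" by algebra
  show ?thesis unfolding assms(4) using assms(1-3)
    by (simp add: field_simps power2_eq_square power3_eq_cube power4_eq_xxxx)
qed

lemma alg1:
  fixes U Y D R rd yd :: real
  assumes "0 < U" "U^4 < 1" "Y > 0" "D > 0" "R = (1-U^4)/4"
    "rd = -(U^4*(1-U^4)*(3+U^4))/(48*Y^2)" "yd = (1+3*U^4)*(3+U^4)/(96*Y)"
  shows "rd * Y + yd * R = - (1/(6*D^2)) * qS3 (R*Y) Y Y * (D/(R*Y^3))^2 * (R*Y)"
  using assms(1-4) unfolding assms(5-7) q_red1 by (simp add: field_simps) algebra

lemma alg2:
  fixes U Y D R yd :: real
  assumes "0 < U" "U^4 < 1" "Y > 0" "D > 0" "R = (1-U^4)/4"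
    "yd = (1+3*U^4)*(3+U^4)/(96*Y)"
  shows "yd = - (1/(6*D^2)) * qS3 Y Y (R*Y) * (D/(R*Y^3))^2 * Y"
  using assms(1-4) unfolding assms(5-6) q_red2 by (simp add: field_simps) algebra

lemma alg0:
  fixes U Y D R rd yd :: real
  assumes "0 < U" "U < 1" "Y > 0" "D > 0" "R = (1-U^4)/4"
    "rd = -(U^4*(1-U^4)*(3+U^4))/(48*Y^2)" "yd = (1+3*U^4)*(3+U^4)/(96*Y)"
  shows "(0 * (R * Y^3) - D * (rd * Y^3 + real 3 * (yd * Y^(3 - Suc 0)) * R)) / (R * Y^3 * (R * Y^3))
     = - (1/(6*D^2)) * pS3 (R*Y) Y Y * (D/(R*Y^3))^3"
proof -
  have "(0 * (R * Y^3) - D * (rd * Y^3 + real 3 * (yd * Y^(3 - Suc 0)) * R)) / (R * Y^3 * (R * Y^3))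
      = - D * (rd * Y^3 + R * (3*Y^2*yd)) / (R*Y^3)^2"
    by (simp add: power2_eq_square algebra_simps)
  also have "\<dots> = - (1/(6*D^2)) * pS3 (R*Y) Y Y * (D/(R*Y^3))^3"
    using alg_g0[OF assms(1-4)] unfolding assms(5-7) .
  finally show ?thesis .
qed


lemma existence:
  fixes h0 h1 h2 h3 :: real
  assumes h: "h0 > 0" "h1 > 0" "h2 > 0" "h3 > 0" "4 * h1 < h2" "h2 = h3"
  shows "\<exists>g0 g1 g2 g3. S3_global_solution h0 h1 h2 h3 g0 g1 g2 g3"
proof -
  define D where "D = detS3 h0 h1 h2 h3"
  have Dv: "D = h0*h1*h2^2" using h(6) by (simp add: D_def detS3_def power2_eq_square)
  have Dpos: "D > 0" using h by (simp add: Dv)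
  define r0 where "r0 = h1/h2"
  have r0: "0 < r0" "4*r0 < 1" using h by (auto simp: r0_def field_simps)
  define u0 where "u0 = root 4 (1 - 4*r0)"
  have u0pos: "0 < u0" using r0 by (simp add: u0_def)
  have u04: "u0^4 = 1 - 4*r0" using r0 by (simp add: u0_def real_root_pow_pos2)
  have u0lt: "u0 < 1"
  proof (rule ccontr)
    assume "\<not> u0 < 1"
    then have "1 \<le> u0^4" by (simp add: one_le_power)
    then show False using u04 r0 by simp
  qed
  define a where "a = 4*h1*h2/u0"
  have apos: "a > 0" using h u0pos by (simp add: a_def)
  define \<phi> where "\<phi> v = 48*a/((1-v^4)^2*(3+v^4))" for v :: real
  obtain u where u0: "u 0 = u0"
    and uprop: "\<And>t. t \<ge> 0 \<Longrightarrow> 0 < u t \<and> u t < 1 \<and> (u has_real_derivative inverse (\<phi> (u t))) (at t)"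
  proof -
    have "\<exists>u. u 0 = u0 \<and> (\<forall>t\<ge>0. 0 < u t \<and> u t < 1 \<and> (u has_real_derivative inverse (\<phi> (u t))) (at t))"
    proof (rule scalar_ode[where k="3*a/4"])
      fix b :: real assume b: "0 \<le> b" "b < 1"
      show "continuous_on {0..b} \<phi>" unfolding \<phi>_def
      proof (intro continuous_intros ballI)
        fix x :: real assume "x \<in> {0..b}"
        then have "0 \<le> x" "x < 1" using b by auto
        then have x4: "x^4 < 1" by (rule u4_lt1)
        have p3: "0 < 3 + x^4" using \<open>0 \<le> x\<close> by (simp add: add_pos_nonneg)
        have p1: "0 < 1 - x^4" using x4 by simp
        show "(1 - x^4)^2 * (3 + x^4) \<noteq> 0" using p1 p3 by simp
      qed
    next
      fix v :: real assume v: "0 \<le> v" "v < 1"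
      have "v^4 < 1" using u4_lt1 v by auto
      then show "\<phi> v > 0" using apos by (simp add: \<phi>_def add_pos_nonneg)
      show "\<phi> v \<ge> (3*a/4)/(1-v)^2" unfolding \<phi>_def by (rule phi_low[OF v apos])
    qed (use apos u0pos u0lt in auto)
    then show ?thesis using that by blast
  qed
  define Y where "Y s = sqrt (a * u s / (1 - (u s)^4))" for s
  have Ypos: "\<And>t. t \<ge> 0 \<Longrightarrow> Y t > 0"
  proof -
    fix t :: real assume t: "t \<ge> 0"
    have "(u t)^4 < 1" using uprop[OF t] u4_lt1 by auto
    then show "Y t > 0" using uprop[OF t] apos by (simp add: Y_def)
  qed
  have Ysq: "\<And>t. t \<ge> 0 \<Longrightarrow> (Y t)^2 = a * u t / (1 - (u t)^4)"
  proof -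
    fix t :: real assume t: "t \<ge> 0"
    have "(u t)^4 < 1" using uprop[OF t] u4_lt1 by auto
    then show "(Y t)^2 = a * u t / (1 - (u t)^4)" using uprop[OF t] apos by (simp add: Y_def)
  qed
  have dZ: "\<And>t. t \<ge> 0 \<Longrightarrow> ((\<lambda>s. a * u s / (1 - (u s)^4)) has_real_derivative
      (1+3*(u t)^4)*(3+(u t)^4)/48) (at t)"
  proof -
    fix t :: real assume t: "t \<ge> 0"
    have u4: "(u t)^4 < 1" using uprop[OF t] u4_lt1 by auto
    define W where "W = 1 - (u t)^4"
    have nz: "W \<noteq> 0" using u4 by (simp add: W_def)
    have du: "(u has_real_derivative W^2*(3 + (u t)^4)/(48*a)) (at t)"
      using uprop[OF t] by (simp add: \<phi>_def W_def)
    show "?thesis t"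
      apply (rule derivative_eq_intros du refl)+
      using nz apos apply (simp add: W_def)
      using alg_dZ[OF nz _ W_def, of a] apos by (simp add: W_def)
  qed
  define R where "R s = (1 - (u s)^4)/4" for s
  have dRY: "\<And>t. t \<ge> 0 \<Longrightarrow>
      (R has_real_derivative -((u t)^4*(1-(u t)^4)*(3+(u t)^4))/(48*(Y t)^2)) (at t) \<and>
      (Y has_real_derivative (1+3*(u t)^4)*(3+(u t)^4)/(96*Y t)) (at t)"
  proof -
    fix t :: real assume t: "t \<ge> 0"
    have u4: "(u t)^4 < 1" using uprop[OF t] u4_lt1 by auto
    define W where "W = 1 - (u t)^4"
    have nz: "W \<noteq> 0" using u4 by (simp add: W_def)
    have du: "(u has_real_derivative W^2*(3 + (u t)^4)/(48*a)) (at t)"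
      using uprop[OF t] by (simp add: \<phi>_def W_def)
    have "(R has_real_derivative -((u t)^4*W*(3+(u t)^4))/(48*(Y t)^2)) (at t)"
      unfolding R_def
      apply (rule derivative_eq_intros du refl)+
       apply simp
      apply (rule alg_dR[OF nz])
      using apos uprop[OF t] Ysq[OF t] by (auto simp: W_def)
    moreover have "(Y has_real_derivative (1+3*(u t)^4)*(3+(u t)^4)/(96*Y t)) (at t)"
    proof -
      have zpos: "a * u t / (1 - (u t)^4) > 0" using apos uprop[OF t] u4 by simp
      have "((\<lambda>s. sqrt (a * u s / (1 - (u s)^4))) has_real_derivative
          inverse (sqrt (a * u t / (1 - (u t)^4))) / 2 * ((1+3*(u t)^4)*(3+(u t)^4)/48)) (at t)"
        by (rule DERIV_chain2[OF DERIV_real_sqrt[OF zpos] dZ[OF t]])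
      then show ?thesis by (simp add: Y_def[abs_def] field_simps)
    qed
    ultimately show "?thesis t" by (simp add: W_def)
  qed
  define g1 where "g1 = (\<lambda>s. R s * Y s)"
  define g0 where "g0 = (\<lambda>s. D/(R s * (Y s)^3))"
  have bv: "betaS3 h0 h1 h2 h3 = 1/(6*D^2)" by (simp add: betaS3_def D_def)
  have ders: "\<And>t. t \<ge> 0 \<Longrightarrow>
     (g0 has_real_derivative (- betaS3 h0 h1 h2 h3 * pS3 (g1 t) (Y t) (Y t) * (g0 t)^3)) (at t) \<and>
     (g1 has_real_derivative (- betaS3 h0 h1 h2 h3 * qS3 (g1 t) (Y t) (Y t) * (g0 t)^2 * g1 t)) (at t) \<and>
     (Y has_real_derivative (- betaS3 h0 h1 h2 h3 * qS3 (Y t) (Y t) (g1 t) * (g0 t)^2 * Y t)) (at t) \<and>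
     (Y has_real_derivative (- betaS3 h0 h1 h2 h3 * qS3 (Y t) (g1 t) (Y t) * (g0 t)^2 * Y t)) (at t)"
  proof -
    fix t :: real assume t: "t \<ge> 0"
    have U: "0 < u t" "u t < 1" using uprop[OF t] by auto
    have u4: "(u t)^4 < 1" using U u4_lt1 by auto
    have Yp: "Y t > 0" by (rule Ypos[OF t])
    have Rv: "R t = (1 - (u t)^4)/4" by (simp add: R_def)
    have Rp: "R t > 0" using u4 Rv by simp
    have dR: "(R has_real_derivative -((u t)^4*(1-(u t)^4)*(3+(u t)^4))/(48*(Y t)^2)) (at t)"
      and dY: "(Y has_real_derivative (1+3*(u t)^4)*(3+(u t)^4)/(96*Y t)) (at t)"
      using dRY[OF t] by auto
    have e0: "(g0 has_real_derivative (- (1/(6*D^2)) * pS3 (R t * Y t) (Y t) (Y t) * (D/(R t*(Y t)^3))^3)) (at t)"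
      unfolding g0_def
      apply (rule derivative_eq_intros dR dY refl)+
      using Rp Yp apply simp
      by (rule alg0[OF U Yp Dpos Rv refl refl])
    have e1: "(g1 has_real_derivative (- (1/(6*D^2)) * qS3 (R t * Y t) (Y t) (Y t) * (D/(R t*(Y t)^3))^2 * (R t * Y t))) (at t)"
      unfolding g1_def
      apply (rule derivative_eq_intros dR dY refl)+
      by (rule alg1[OF U(1) u4 Yp Dpos Rv refl refl])
    have e2: "(Y has_real_derivative (- (1/(6*D^2)) * qS3 (Y t) (Y t) (R t * Y t) * (D/(R t*(Y t)^3))^2 * Y t)) (at t)"
      using dY alg2[OF U(1) u4 Yp Dpos Rv refl] by simp
    have q3: "qS3 (Y t) (R t * Y t) (Y t) = qS3 (Y t) (Y t) (R t * Y t)"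
      by (simp add: q_red2 q_red3)
    show "?thesis t" using e0 e1 e2 q3 by (simp add: bv g0_def g1_def)
  qed
  have init: "g0 0 = h0" "g1 0 = h1" "Y 0 = h2"
  proof -
    have e: "1 - u0^4 = 4*h1/h2" using u04 by (simp add: r0_def)
    have "a * u0 / (1 - u0^4) = h2^2" unfolding e using h u0pos by (simp add: a_def field_simps power2_eq_square)
    then show Y0: "Y 0 = h2" using h by (simp add: Y_def u0)
    have R0: "R 0 = h1/h2" using u04 by (simp add: R_def u0 r0_def)
    show "g1 0 = h1" using h by (simp add: g1_def R0 Y0)
    show "g0 0 = h0" using h by (simp add: g0_def R0 Y0 Dv field_simps power2_eq_square power3_eq_cube)
  qed
  show ?thesis
  proof (rule exI[of _ g0], rule exI[of _ g1], rule exI[of _ Y], rule exI[of _ Y])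
    show "S3_global_solution h0 h1 h2 h3 g0 g1 Y Y"
      unfolding S3_global_solution_def
      using init h(6) ders by (auto intro: has_field_derivative_at_within)
  qed
qed


theorem theorem5p19:
  fixes h0 h1 h2 h3 :: real
  assumes "h0 > 0" "h1 > 0" "h2 > 0" "h3 > 0"
    and "4 * h1 < h2" "h2 = h3"
  shows "(\<exists>g0 g1 g2 g3. S3_global_solution h0 h1 h2 h3 g0 g1 g2 g3) \<and>
         (\<forall>g0 g1 g2 g3. S3_global_solution h0 h1 h2 h3 g0 g1 g2 g3 \<longrightarrow>
            (\<forall>t\<ge>0. g2 t = g3 t) \<and>
            strict_mono_on {0..} g2 \<and> strict_mono_on {0..} g3 \<and>
            (g0 \<longlongrightarrow> 0) at_top \<and> (g1 \<longlongrightarrow> 0) at_top \<and>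
            filterlim g2 at_top at_top \<and> filterlim g3 at_top at_top \<and>
            (\<forall>t\<ge>0. (g0 t * (g2 t)^3 - 4 * detS3 h0 h1 h2 h3) * (g0 t)^3 * g2 t
                    = (h0 * h2^3 - 4 * detS3 h0 h1 h2 h3) * h0^3 * h2))"
    using existence[OF assms] sol_part2[OF assms] by blast

end
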